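(* Let $\rho>0$, $\xi\in\mathbb{R}$, and $H_0=\frac{1}{2(1+\rho r^2)}\big(P_r^2+\frac{P_\phi^2}{r^2}+\xi r^2\big)$ on $(r,\phi)\in(0,\infty)\times\mathbb{S}^1$. Consider trajectories of the Hamiltonian flow on a level set $H_0=E$, $P_\phi=L>0$, with $\phi$ normalized (by a rotation) so that $\phi=0$ at a point where $r$ is minimal. Put $$e=\sqrt{1+\frac{L^2}{E^2}(2\rho E-\xi)},\qquad E_\pm=L^2\big(-\rho\pm\sqrt{\rho^2+\xi/L^2}\big).$$ (a) If $E\ge\xi/(2\rho)$: for $E=0$ the trajectories are $\frac{L}{r^2}=\sqrt{|\xi|}\cos(2\phi)$, and for $E\ne0$ they are $\frac{L^2}{|E|r^2}=\mathrm{sign}(E)+e\cos(2\phi)$. (b) If $E_+<E<\xi/(2\rho)$: the trajectories are $\frac{L^2}{Er^2}=1+e\cos(2\phi)$; in this case they are closed. *)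

theory Defs
  imports "HOL-Analysis.Analysis"
begin

text \<open>The Hamiltonian H0 on T*((0,inf) x S^1), in canonical coordinates
  (r, phi, P_r, P_phi).  It does not depend on phi; the argument is kept so
  that Hamilton's equations can be written uniformly.\<close>
definition H0 :: "real \<Rightarrow> real \<Rightarrow> real \<Rightarrow> real \<Rightarrow> real \<Rightarrow> real \<Rightarrow> real" where
  "H0 \<rho> \<xi> r phi pr pphi = (pr\<^sup>2 + pphi\<^sup>2 / r\<^sup>2 + \<xi> * r\<^sup>2) / (2 * (1 + \<rho> * r\<^sup>2))"

text \<open>A (complete) trajectory of the Hamiltonian flow of H0: a curve
  t \<mapsto> (r t, phi t, pr t, pphi t) with r t > 0, where phi is a real-valued
  (continuous) lift of the angle on S^1, solving Hamilton's equations.\<close>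
definition hamiltonian_trajectory ::
  "real \<Rightarrow> real \<Rightarrow> (real \<Rightarrow> real) \<Rightarrow> (real \<Rightarrow> real) \<Rightarrow> (real \<Rightarrow> real) \<Rightarrow> (real \<Rightarrow> real) \<Rightarrow> bool" where
  "hamiltonian_trajectory \<rho> \<xi> r phi pr pphi \<longleftrightarrow>
     (\<forall>t. r t > 0) \<and>
     (\<forall>t. (r has_real_derivative deriv (\<lambda>p. H0 \<rho> \<xi> (r t) (phi t) p (pphi t)) (pr t)) (at t)) \<and>
     (\<forall>t. (phi has_real_derivative deriv (\<lambda>q. H0 \<rho> \<xi> (r t) (phi t) (pr t) q) (pphi t)) (at t)) \<and>
     (\<forall>t. (pr has_real_derivative - deriv (\<lambda>x. H0 \<rho> \<xi> x (phi t) (pr t) (pphi t)) (r t)) (at t)) \<and>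
     (\<forall>t. (pphi has_real_derivative - deriv (\<lambda>y. H0 \<rho> \<xi> (r t) y (pr t) (pphi t)) (phi t)) (at t))"

end

theory Submission imports Defs begin

lemma H0_dp:
  assumes "1 + \<rho>*r\<^sup>2 \<noteq> 0"
  shows "deriv (\<lambda>p. H0 \<rho> \<xi> r y p q) p0 = p0 / (1 + \<rho>*r\<^sup>2)"
proof -
  have "((\<lambda>p. H0 \<rho> \<xi> r y p q) has_real_derivative p0 / (1 + \<rho>*r\<^sup>2)) (at p0)"
    unfolding H0_def using assms
    apply (auto intro!: derivative_eq_intros)
    by (simp add: divide_simps power2_eq_square)
  then show ?thesis by (rule DERIV_imp_deriv)
qed

lemma H0_dq:
  assumes "1 + \<rho>*r\<^sup>2 \<noteq> 0" "r \<noteq> 0"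
  shows "deriv (\<lambda>q. H0 \<rho> \<xi> r y p q) q0 = q0 / (r\<^sup>2 * (1 + \<rho>*r\<^sup>2))"
proof -
  have "((\<lambda>q. H0 \<rho> \<xi> r y p q) has_real_derivative q0 / (r\<^sup>2 * (1 + \<rho>*r\<^sup>2))) (at q0)"
    unfolding H0_def using assms
    apply (auto intro!: derivative_eq_intros)
    apply (simp add: divide_simps power2_eq_square)
    by algebra
  then show ?thesis by (rule DERIV_imp_deriv)
qed

lemma H0_dx:
  assumes "1 + \<rho>*x0\<^sup>2 \<noteq> 0" "x0 \<noteq> 0"
  shows "deriv (\<lambda>x. H0 \<rho> \<xi> x y p q) x0 =
     ((-2*q\<^sup>2/x0^3 + 2*\<xi>*x0) * (2*(1+\<rho>*x0\<^sup>2)) - (p\<^sup>2 + q\<^sup>2/x0\<^sup>2 + \<xi>*x0\<^sup>2)*(4*\<rho>*x0)) / (2*(1+\<rho>*x0\<^sup>2))\<^sup>2"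
proof -
  have "((\<lambda>x. H0 \<rho> \<xi> x y p q) has_real_derivative
     ((-2*q\<^sup>2/x0^3 + 2*\<xi>*x0) * (2*(1+\<rho>*x0\<^sup>2)) - (p\<^sup>2 + q\<^sup>2/x0\<^sup>2 + \<xi>*x0\<^sup>2)*(4*\<rho>*x0)) / (2*(1+\<rho>*x0\<^sup>2))\<^sup>2) (at x0)"
    unfolding H0_def using assms
    apply (auto intro!: derivative_eq_intros)
    apply (simp add: divide_simps power2_eq_square power3_eq_cube)
    by algebra
  then show ?thesis by (rule DERIV_imp_deriv)
qed


lemma orbit:
  fixes \<rho> \<xi> E L t0 :: real and r phi pr pphi :: "real \<Rightarrow> real"
  assumes rho: "\<rho> > 0" and Lpos: "L > 0"
    and tr: "hamiltonian_trajectory \<rho> \<xi> r phi pr pphi"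
    and en: "\<forall>t. H0 \<rho> \<xi> (r t) (phi t) (pr t) (pphi t) = E"
    and pp: "\<forall>t. pphi t = L"
    and mn: "\<forall>t. r t0 \<le> r t" and ph0: "phi t0 = 0"
  shows "(\<forall>t. r t > 0) \<and>
         (\<forall>t. (phi has_real_derivative L / ((r t)\<^sup>2 * (1 + \<rho> * (r t)\<^sup>2))) (at t)) \<and>
         (\<forall>t. (pr t)\<^sup>2 + L\<^sup>2/(r t)\<^sup>2 + \<xi> * (r t)\<^sup>2 = 2 * E * (1 + \<rho> * (r t)\<^sup>2)) \<and>
         0 \<le> E\<^sup>2 + L\<^sup>2 * (2*E*\<rho> - \<xi>) \<and>
         (\<forall>t. L\<^sup>2 / (r t)\<^sup>2 = E + sqrt (E\<^sup>2 + L\<^sup>2 * (2*E*\<rho> - \<xi>)) * cos (2 * phi t)) \<and>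
         (\<forall>t. L * pr t / r t = sqrt (E\<^sup>2 + L\<^sup>2 * (2*E*\<rho> - \<xi>)) * sin (2 * phi t))"
proof -
  have rpos: "\<And>t. r t > 0" using tr unfolding hamiltonian_trajectory_def by auto
  define D where "D t = 1 + \<rho> * (r t)\<^sup>2" for t
  have Dpos: "\<And>t. D t > 0" unfolding D_def using rho by (simp add: add_pos_nonneg)
  have dr: "\<And>t. (r has_real_derivative pr t / D t) (at t)"
    using tr Dpos unfolding hamiltonian_trajectory_def D_def
    by (metis H0_dp less_irrefl)
  have dphi: "\<And>t. (phi has_real_derivative L / ((r t)\<^sup>2 * D t)) (at t)"
  proof -
    fix t
    have "(phi has_real_derivative deriv (\<lambda>q. H0 \<rho> \<xi> (r t) (phi t) (pr t) q) (pphi t)) (at t)"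
      using tr unfolding hamiltonian_trajectory_def by blast
    moreover have "deriv (\<lambda>q. H0 \<rho> \<xi> (r t) (phi t) (pr t) q) (pphi t) = L / ((r t)\<^sup>2 * D t)"
      using H0_dq[of \<rho> "r t"] Dpos[of t] rpos[of t] pp unfolding D_def by auto
    ultimately show "?thesis t" by simp
  qed
  have en': "\<And>t. (pr t)\<^sup>2 + L\<^sup>2/(r t)\<^sup>2 + \<xi> * (r t)\<^sup>2 = 2 * E * D t"
  proof -
    fix t
    have "H0 \<rho> \<xi> (r t) (phi t) (pr t) L = E" using en pp by metis
    then show "?thesis t" using Dpos[of t] unfolding H0_def D_def
      by (simp add: divide_simps)
  qed
  have dpr: "\<And>t. (pr has_real_derivative (L\<^sup>2/(r t)^3 - \<xi> * r t + 2*E*\<rho>*r t) / D t) (at t)"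
  proof -
    fix t
    have 1: "(pr has_real_derivative - deriv (\<lambda>x. H0 \<rho> \<xi> x (phi t) (pr t) (pphi t)) (r t)) (at t)"
      using tr unfolding hamiltonian_trajectory_def by blast
    have "- deriv (\<lambda>x. H0 \<rho> \<xi> x (phi t) (pr t) (pphi t)) (r t)
        = - (((-2*L\<^sup>2/(r t)^3 + 2*\<xi>*r t) * (2*D t) - (2 * E * D t)*(4*\<rho>*r t)) / (2*D t)\<^sup>2)"
      using H0_dx[of \<rho> "r t"] Dpos[of t] rpos[of t] pp en'[of t] unfolding D_def by auto
    also have "\<dots> = (L\<^sup>2/(r t)^3 - \<xi> * r t + 2*E*\<rho>*r t) / D t"
      using Dpos[of t] by (simp add: divide_simps power2_eq_square) (simp add: algebra_simps)
    finally show "?thesis t" using 1 by simp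
  qed
  define W where "W t = L\<^sup>2/(r t)\<^sup>2 - E" for t
  define V where "V t = L * pr t / r t" for t
  have dW: "\<And>t. (W has_real_derivative -2 * (L / ((r t)\<^sup>2 * D t)) * V t) (at t)"
  proof -
    fix t
    show "?thesis t" unfolding W_def[abs_def] V_def
      using rpos[of t] Dpos[of t]
      apply (auto intro!: derivative_eq_intros dr)
      apply (simp add: divide_simps power2_eq_square power3_eq_cube)
      by (simp add: algebra_simps eval_nat_numeral)
  qed
  have dV: "\<And>t. (V has_real_derivative 2 * (L / ((r t)\<^sup>2 * D t)) * W t) (at t)"
  proof -
    fix t
    have e: "(pr t)\<^sup>2 = 2 * E * D t - L\<^sup>2/(r t)\<^sup>2 - \<xi> * (r t)\<^sup>2" using en'[of t] by simp
    have "(V has_real_derivative L * (((L\<^sup>2/(r t)^3 - \<xi> * r t + 2*E*\<rho>*r t) / D t) * r t - pr t * (pr t / D t)) / (r t)\<^sup>2) (at t)"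
      unfolding V_def[abs_def] using rpos[of t]
      by (auto intro!: derivative_eq_intros dr dpr simp: power2_eq_square algebra_simps)
    moreover have "L * (((L\<^sup>2/(r t)^3 - \<xi> * r t + 2*E*\<rho>*r t) / D t) * r t - pr t * (pr t / D t)) / (r t)\<^sup>2
       = 2 * (L / ((r t)\<^sup>2 * D t)) * W t"
    proof -
      have "pr t * (pr t / D t) = (2 * E * D t - L\<^sup>2/(r t)\<^sup>2 - \<xi> * (r t)\<^sup>2) / D t"
        using e by (simp add: power2_eq_square)
      then show ?thesis unfolding W_def D_def using rpos[of t] Dpos[of t]
        by (simp add: divide_simps power2_eq_square power3_eq_cube D_def) (simp add: algebra_simps)
    qed
    ultimately show "?thesis t" by simp
  qed
  define A where "A t = W t * cos (2 * phi t) + V t * sin (2 * phi t)" for t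
  define B where "B t = V t * cos (2 * phi t) - W t * sin (2 * phi t)" for t
  have dA: "\<And>t. (A has_real_derivative 0) (at t)"
  proof -
    fix t
    show "?thesis t" unfolding A_def[abs_def]
      by (auto intro!: derivative_eq_intros dW dV dphi)
  qed
  have dB: "\<And>t. (B has_real_derivative 0) (at t)"
  proof -
    fix t
    show "?thesis t" unfolding B_def[abs_def]
      by (auto intro!: derivative_eq_intros dW dV dphi)
  qed
  have Ac: "\<And>t. A t = A t0" using dA DERIV_isconst_all by blast
  have Bc: "\<And>t. B t = B t0" using dB DERIV_isconst_all by blast
  have pr0: "pr t0 = 0"
  proof -
    have "pr t0 / D t0 = 0"
      by (rule DERIV_local_min[OF dr[of t0], of 1]) (use mn in auto)
    then show ?thesis using Dpos[of t0] by simp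
  qed
  define C where "C = W t0"
  have V0: "V t0 = 0" unfolding V_def using pr0 by simp
  have A0: "A t0 = C" unfolding A_def C_def using V0 ph0 by simp
  have B0: "B t0 = 0" unfolding B_def using V0 ph0 by simp
  have Wt: "\<And>t. W t = C * cos (2 * phi t)"
  proof -
    fix t
    have "W t = W t * ((sin (2 * phi t))\<^sup>2 + (cos (2 * phi t))\<^sup>2)" by (metis sin_cos_squared_add mult.right_neutral)
    also have "\<dots> = A t * cos (2 * phi t) - B t * sin (2 * phi t)"
      unfolding A_def B_def power2_eq_square by algebra
    finally have "W t = A t * cos (2 * phi t) - B t * sin (2 * phi t)" .
    then show "?thesis t" using Ac[of t] Bc[of t] A0 B0 by simp
  qed
  have Vt: "\<And>t. V t = C * sin (2 * phi t)"
  proof -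
    fix t
    have "V t = V t * ((sin (2 * phi t))\<^sup>2 + (cos (2 * phi t))\<^sup>2)" by (metis sin_cos_squared_add mult.right_neutral)
    also have "\<dots> = A t * sin (2 * phi t) + B t * cos (2 * phi t)"
      unfolding A_def B_def power2_eq_square by algebra
    finally have "V t = A t * sin (2 * phi t) + B t * cos (2 * phi t)" .
    then show "?thesis t" using Ac[of t] Bc[of t] A0 B0 by simp
  qed
  define K where "K = E\<^sup>2 + L\<^sup>2 * (2*E*\<rho> - \<xi>)"
  have WV: "\<And>t. (W t)\<^sup>2 + (V t)\<^sup>2 = K"
  proof -
    fix t
    have e: "(pr t)\<^sup>2 = 2 * E * D t - L\<^sup>2/(r t)\<^sup>2 - \<xi> * (r t)\<^sup>2" using en'[of t] by simp
    have "(V t)\<^sup>2 = L\<^sup>2 * (pr t)\<^sup>2 / (r t)\<^sup>2" unfolding V_def by (simp add: power_divide power_mult_distrib)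
    also have "\<dots> = L\<^sup>2 * (2 * E * D t - L\<^sup>2/(r t)\<^sup>2 - \<xi> * (r t)\<^sup>2) / (r t)\<^sup>2" using e by simp
    finally show "?thesis t" unfolding W_def K_def D_def using rpos[of t]
      by (simp add: divide_simps power2_eq_square) (simp add: algebra_simps)
  qed
  have CK: "C\<^sup>2 = K" using WV[of t0] V0 C_def by simp
  have Cnn: "C \<ge> 0"
  proof (rule ccontr)
    assume neg: "\<not> C \<ge> 0"
    have dpp: "\<exists>y. (phi has_real_derivative y) (at x) \<and> y > 0" for x
      using dphi[of x] rpos[of x] Dpos[of x] Lpos by (intro exI[of _ "L / ((r x)\<^sup>2 * D x)"]) auto
    have ph1: "phi t0 < phi (t0 + 1)"
      by (rule DERIV_pos_imp_increasing[of t0 "t0+1" phi]) (use dpp in auto)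
    define y where "y = min (phi (t0 + 1)) (pi / 4)"
    obtain s where s: "phi s = y"
      using IVT[of phi t0 y "t0 + 1"] ph1 ph0 dphi DERIV_isCont unfolding y_def by force
    have y0: "0 < y" "y \<le> pi/4" using ph1 ph0 unfolding y_def by auto
    have "cos (2 * phi s) < cos 0"
      using s y0 by (intro cos_monotone_0_pi) auto
    then have cs: "cos (2 * phi s) < 1" by simp
    have "(r t0)\<^sup>2 \<le> (r s)\<^sup>2" using mn rpos[of t0] by (intro power_mono) auto
    then have "L\<^sup>2/(r s)\<^sup>2 \<le> L\<^sup>2/(r t0)\<^sup>2" using rpos[of t0] rpos[of s]
      by (intro divide_left_mono) auto
    then have "W s \<le> W t0" unfolding W_def by simp
    then have "C * cos (2 * phi s) \<le> C * 1" using Wt[of s] C_def by simp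
    then show False using neg cs by (simp add: mult_le_cancel_left)
  qed
  have Csq: "C = sqrt K" using CK Cnn by (metis real_sqrt_abs abs_of_nonneg)
  show ?thesis
  proof (intro conjI allI)
    show "\<And>t. r t > 0" by (rule rpos)
    show "\<And>t. (phi has_real_derivative L / ((r t)\<^sup>2 * (1 + \<rho> * (r t)\<^sup>2))) (at t)"
      using dphi unfolding D_def .
    show "\<And>t. (pr t)\<^sup>2 + L\<^sup>2/(r t)\<^sup>2 + \<xi> * (r t)\<^sup>2 = 2 * E * (1 + \<rho> * (r t)\<^sup>2)"
      using en' unfolding D_def .
    show "0 \<le> E\<^sup>2 + L\<^sup>2 * (2*E*\<rho> - \<xi>)" using CK K_def by (metis zero_le_power2)
    show "\<And>t. L\<^sup>2 / (r t)\<^sup>2 = E + sqrt (E\<^sup>2 + L\<^sup>2 * (2*E*\<rho> - \<xi>)) * cos (2 * phi t)"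
      using Wt Csq unfolding W_def K_def by (metis add.commute diff_eq_eq)
    show "\<And>t. L * pr t / r t = sqrt (E\<^sup>2 + L\<^sup>2 * (2*E*\<rho> - \<xi>)) * sin (2 * phi t)"
      using Vt Csq unfolding V_def K_def by metis
  qed
qed

lemma periodic:
  fixes \<rho> E L C :: real and r phi pr :: "real \<Rightarrow> real"
  assumes rho: "\<rho> > 0" and Lpos: "L > 0" and Cnn: "0 \<le> C" and CE: "C < E"
    and rpos: "\<And>t. r t > 0"
    and dphi: "\<And>t. (phi has_real_derivative L / ((r t)\<^sup>2 * (1 + \<rho> * (r t)\<^sup>2))) (at t)"
    and orb: "\<And>t. L\<^sup>2 / (r t)\<^sup>2 = E + C * cos (2 * phi t)"
    and vorb: "\<And>t. L * pr t / r t = C * sin (2 * phi t)"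
  shows "\<exists>T > 0. \<forall>t. r (t + T) = r t \<and> pr (t + T) = pr t \<and>
                 (\<exists>k::int. phi (t + T) = phi t + 2 * pi * of_int k)"
proof -
  define F where "F t = L / ((r t)\<^sup>2 * (1 + \<rho> * (r t)\<^sup>2))" for t
  define m where "m = E - C"
  have mpos: "m > 0" using CE m_def by simp
  define g where "g = L / ((L\<^sup>2/m) * (1 + \<rho> * (L\<^sup>2/m)))"
  have gpos: "g > 0" unfolding g_def using mpos Lpos rho by (auto intro!: divide_pos_pos add_pos_nonneg mult_pos_pos)
  have rb: "(r t)\<^sup>2 \<le> L\<^sup>2/m" for t
  proof -
    have "C * cos (2 * phi t) \<ge> C * (-1)" using Cnn by (intro mult_left_mono) auto
    then have "m \<le> L\<^sup>2 / (r t)\<^sup>2" using orb[of t] m_def by simp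
    then have "m * (r t)\<^sup>2 \<le> L\<^sup>2" using rpos[of t] by (simp add: le_divide_eq)
    then show ?thesis using mpos by (simp add: le_divide_eq mult.commute)
  qed
  have Fpos: "F t > 0" for t unfolding F_def using rpos[of t] rho Lpos by (auto intro!: divide_pos_pos add_pos_nonneg mult_pos_pos)
  have Fg: "g \<le> F t" for t
  proof -
    have "(r t)\<^sup>2 * (1 + \<rho> * (r t)\<^sup>2) \<le> (L\<^sup>2/m) * (1 + \<rho> * (L\<^sup>2/m))"
      using rb[of t] rho mpos by (intro mult_mono add_left_mono mult_left_mono) auto
    then show ?thesis unfolding F_def g_def using rpos[of t] rho Lpos mpos
      by (intro divide_left_mono mult_pos_pos add_pos_nonneg) auto
  qed
  have dF: "\<And>t. (phi has_real_derivative F t) (at t)" using dphi F_def by simp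
  have mono: "phi a < phi b" if "a < b" for a b
    by (rule DERIV_pos_imp_increasing[OF that]) (use dF Fpos in blast)
  have growth: "phi b - phi a \<ge> g * (b - a)" if ab: "a < b" for a b
  proof -
    obtain z where "phi b - phi a = (b - a) * F z" using MVT2[where a=a and b=b and f=phi and f'=F] ab dF by blast
    then show ?thesis using Fg[of z] ab by (simp add: mult.commute mult_left_mono)
  qed
  have cont: "\<And>t. isCont phi t" using dF DERIV_isCont by blast
  have surj: "\<exists>t. phi t = y" for y
  proof -
    define d where "d = (\<bar>y\<bar> + \<bar>phi 0\<bar>) / g + 1"
    have dpos: "d > 0" unfolding d_def using gpos by (intro add_nonneg_pos divide_nonneg_pos) auto
    have "phi d - phi 0 \<ge> g * d" using growth[of 0 d] dpos by simp
    moreover have "g * d = \<bar>y\<bar> + \<bar>phi 0\<bar> + g" unfolding d_def using gpos by (simp add: field_simps)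
    ultimately have up: "y \<le> phi d" using abs_ge_self[of y] abs_ge_minus_self[of "phi 0"] gpos by linarith
    have "phi 0 - phi (-d) \<ge> g * d" using growth[of "-d" 0] dpos by simp
    with \<open>g * d = _\<close> have lo: "phi (-d) \<le> y" using abs_ge_minus_self[of y] abs_ge_self[of "phi 0"] gpos by linarith
    show ?thesis using IVT[of phi "-d" y d] up lo dpos cont by auto
  qed
  have injphi: "inj phi" by (metis injI linorder_neqE_linordered_idom mono order_less_irrefl)
  define \<tau> where "\<tau> = inv phi"
  have pt: "phi (\<tau> y) = y" for y unfolding \<tau>_def by (metis surj surj_def surj_f_inv_f)
  have tp: "\<tau> (phi t) = t" for t unfolding \<tau>_def using injphi by simp
  have dtau: "DERIV \<tau> y :> inverse (F (\<tau> y))" for y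
  proof (rule DERIV_inverse_function[where f=phi and g=\<tau> and x=y and a="y - 1" and b="y + 1"])
    show "DERIV phi (\<tau> y) :> F (\<tau> y)" by (rule dF)
    show "F (\<tau> y) \<noteq> 0" using Fpos[of "\<tau> y"] by simp
    show "y - 1 < y" "y < y + 1" by auto
    show "\<And>z. y - 1 < z \<Longrightarrow> z < y + 1 \<Longrightarrow> phi (\<tau> z) = z" by (rule pt)
    have "isCont \<tau> (phi (\<tau> y))"
      by (rule isCont_inverse_function[of 1]) (auto simp: tp cont)
    then show "isCont \<tau> y" by (simp add: pt)
  qed
  have req: "r s = r t" if "cos (2 * phi s) = cos (2 * phi t)" for s t
  proof -
    have "L\<^sup>2 / (r s)\<^sup>2 = L\<^sup>2 / (r t)\<^sup>2" using orb[of s] orb[of t] that by simp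
    then have "(r s)\<^sup>2 = (r t)\<^sup>2" using Lpos rpos[of s] rpos[of t] by (simp add: divide_simps)
    then show ?thesis using rpos[of s] rpos[of t] by (simp add: power2_eq_iff_nonneg less_imp_le)
  qed
  have c1: "cos (2 * (y + pi)) = cos (2 * y)" for y
    by (simp add: distrib_left)
  define h where "h y = \<tau> (y + pi) - \<tau> y" for y
  have dh: "DERIV h y :> 0" for y
  proof -
    have "DERIV h y :> inverse (F (\<tau> (y + pi))) * 1 - inverse (F (\<tau> y))"
      unfolding h_def[abs_def]
      by (intro DERIV_diff DERIV_chain2[OF dtau] dtau) (auto intro!: derivative_eq_intros)
    moreover have "r (\<tau> (y + pi)) = r (\<tau> y)" using req c1 pt by metis
    ultimately show ?thesis unfolding F_def by simp
  qed
  define T1 where "T1 = \<tau> pi - \<tau> 0"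
  have hc: "\<tau> (y + pi) = \<tau> y + T1" for y
    using DERIV_isconst_all[of h y 0] dh unfolding h_def T1_def by simp
  have T1pos: "T1 > 0"
  proof (rule ccontr)
    assume "\<not> T1 > 0"
    then have "\<tau> pi \<le> \<tau> 0" unfolding T1_def by simp
    then have "phi (\<tau> pi) \<le> phi (\<tau> 0)" using mono by (metis order_le_less)
    then show False using pt[of pi] pt[of 0] pi_gt_zero by simp
  qed
  have ps: "phi (t + T1) = phi t + pi" for t
    using hc[of "phi t"] pt[of "phi t + pi"] tp[of t] by metis
  have ps2: "phi (t + 2 * T1) = phi t + 2 * pi" for t
    using ps[of t] ps[of "t + T1"] by (simp add: algebra_simps)
  have c2: "cos (2 * (y + 2 * pi)) = cos (2 * y)" for y
    using c1[of y] c1[of "y + pi"] by (simp add: algebra_simps)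
  have s2: "sin (2 * (y + 2 * pi)) = sin (2 * y)" for y
  proof -
    have "2 * (y + 2 * pi) = (2 * y + 2 * pi) + 2 * pi" by simp
    then show ?thesis by (metis sin_periodic)
  qed
  show ?thesis
  proof (intro exI[of _ "2 * T1"] conjI allI)
    show "2 * T1 > 0" using T1pos by simp
    fix t
    show rr: "r (t + 2 * T1) = r t" using req ps2 c2 by metis
    have "pr s = C * sin (2 * phi s) * r s / L" for s
      using vorb[of s] rpos[of s] Lpos by (simp add: divide_simps) (simp add: algebra_simps)
    then show "pr (t + 2 * T1) = pr t" using rr ps2 s2 by metis
    show "\<exists>k::int. phi (t + 2 * T1) = phi t + 2 * pi * of_int k"
      using ps2 by (intro exI[of _ 1]) simp
  qed
qed

theorem proposition10:
  fixes \<rho> \<xi> E L t0 :: real and r phi pr pphi :: "real \<Rightarrow> real"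
  assumes "\<rho> > 0" and "L > 0"
    and "hamiltonian_trajectory \<rho> \<xi> r phi pr pphi"
    and "\<forall>t. H0 \<rho> \<xi> (r t) (phi t) (pr t) (pphi t) = E"
    and "\<forall>t. pphi t = L"
    and "\<forall>t. r t0 \<le> r t" and "phi t0 = 0"
  shows "(E \<ge> \<xi> / (2 * \<rho>) \<longrightarrow>
            (E = 0 \<longrightarrow> (\<forall>t. L / (r t)\<^sup>2 = sqrt \<bar>\<xi>\<bar> * cos (2 * phi t))) \<and>
            (E \<noteq> 0 \<longrightarrow> (\<forall>t. L\<^sup>2 / (\<bar>E\<bar> * (r t)\<^sup>2)
                 = sgn E + sqrt (1 + L\<^sup>2 / E\<^sup>2 * (2 * \<rho> * E - \<xi>)) * cos (2 * phi t))))
       \<and> (L\<^sup>2 * (- \<rho> + sqrt (\<rho>\<^sup>2 + \<xi> / L\<^sup>2)) < E \<and> E < \<xi> / (2 * \<rho>) \<longrightarrow>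
            (\<forall>t. L\<^sup>2 / (E * (r t)\<^sup>2)
                 = 1 + sqrt (1 + L\<^sup>2 / E\<^sup>2 * (2 * \<rho> * E - \<xi>)) * cos (2 * phi t)) \<and>
            (\<exists>T > 0. \<forall>t. r (t + T) = r t \<and> pr (t + T) = pr t \<and>
                 (\<exists>k::int. phi (t + T) = phi t + 2 * pi * of_int k)))"
proof -
  note O = orbit[OF assms]
  define K where "K = E\<^sup>2 + L\<^sup>2 * (2*E*\<rho> - \<xi>)"
  have rpos: "\<And>t. r t > 0" using O by blast
  have dphi: "\<And>t. (phi has_real_derivative L / ((r t)\<^sup>2 * (1 + \<rho> * (r t)\<^sup>2))) (at t)" using O by blast
  have en: "\<And>t. (pr t)\<^sup>2 + L\<^sup>2/(r t)\<^sup>2 + \<xi> * (r t)\<^sup>2 = 2 * E * (1 + \<rho> * (r t)\<^sup>2)" using O by blast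
  have Knn: "0 \<le> K" using O K_def by blast
  have orb: "\<And>t. L\<^sup>2 / (r t)\<^sup>2 = E + sqrt K * cos (2 * phi t)" using O K_def by blast
  have vorb: "\<And>t. L * pr t / r t = sqrt K * sin (2 * phi t)" using O K_def by blast
  have Lp: "L > 0" using assms by simp
  have rho: "\<rho> > 0" using assms by simp
  have sq: "sqrt (1 + L\<^sup>2 / E\<^sup>2 * (2 * \<rho> * E - \<xi>)) = sqrt K / \<bar>E\<bar>" if "E \<noteq> 0"
  proof -
    have "1 + L\<^sup>2 / E\<^sup>2 * (2 * \<rho> * E - \<xi>) = K / E\<^sup>2"
      unfolding K_def using that by (simp add: field_simps)
    then show ?thesis by (simp add: real_sqrt_divide)
  qed
  have partA: "(E = 0 \<longrightarrow> (\<forall>t. L / (r t)\<^sup>2 = sqrt \<bar>\<xi>\<bar> * cos (2 * phi t))) \<and>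
            (E \<noteq> 0 \<longrightarrow> (\<forall>t. L\<^sup>2 / (\<bar>E\<bar> * (r t)\<^sup>2)
                 = sgn E + sqrt (1 + L\<^sup>2 / E\<^sup>2 * (2 * \<rho> * E - \<xi>)) * cos (2 * phi t)))"
  proof (intro conjI impI allI)
    fix t assume E0: "E = 0"
    have "0 \<le> L\<^sup>2 * (- \<xi>)" using Knn E0 unfolding K_def by simp
    then have "\<xi> \<le> 0" using Lp by (simp add: mult_le_0_iff)
    then have K0: "K = L\<^sup>2 * \<bar>\<xi>\<bar>" using E0 unfolding K_def by simp
    have "sqrt K = L * sqrt \<bar>\<xi>\<bar>" unfolding K0 using Lp by (simp add: real_sqrt_mult)
    then have "L\<^sup>2 / (r t)\<^sup>2 = L * (sqrt \<bar>\<xi>\<bar> * cos (2 * phi t))" using orb[of t] E0 by simp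
    then have eq: "L * (L / (r t)\<^sup>2) = L * (sqrt \<bar>\<xi>\<bar> * cos (2 * phi t))"
      by (simp add: power2_eq_square)
    have Lne: "L \<noteq> 0" using Lp by simp
    show "L / (r t)\<^sup>2 = sqrt \<bar>\<xi>\<bar> * cos (2 * phi t)"
      using mult_left_cancel[OF Lne, of "L / (r t)\<^sup>2" "sqrt \<bar>\<xi>\<bar> * cos (2 * phi t)"] eq by blast
  next
    fix t assume E0: "E \<noteq> 0"
    have "L\<^sup>2 / (\<bar>E\<bar> * (r t)\<^sup>2) = (E + sqrt K * cos (2 * phi t)) / \<bar>E\<bar>"
      using orb[of t] by (metis divide_divide_eq_left mult.commute)
    also have "\<dots> = sgn E + sqrt K / \<bar>E\<bar> * cos (2 * phi t)"
      using E0 by (simp add: add_divide_distrib sgn_if)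
    finally show "L\<^sup>2 / (\<bar>E\<bar> * (r t)\<^sup>2) = sgn E + sqrt (1 + L\<^sup>2 / E\<^sup>2 * (2 * \<rho> * E - \<xi>)) * cos (2 * phi t)"
      using sq[OF E0] by simp
  qed
  have partB: "(\<forall>t. L\<^sup>2 / (E * (r t)\<^sup>2)
                 = 1 + sqrt (1 + L\<^sup>2 / E\<^sup>2 * (2 * \<rho> * E - \<xi>)) * cos (2 * phi t)) \<and>
            (\<exists>T > 0. \<forall>t. r (t + T) = r t \<and> pr (t + T) = pr t \<and>
                 (\<exists>k::int. phi (t + T) = phi t + 2 * pi * of_int k))"
    if Elt: "E < \<xi> / (2 * \<rho>)"
  proof -
    have xi: "2 * \<rho> * E < \<xi>" using Elt rho by (simp add: field_simps)
    have Epos: "E > 0"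
    proof (rule ccontr)
      assume "\<not> E > 0"
      have "0 < (\<xi> - 2 * \<rho> * E) * (r t0)\<^sup>2" using xi rpos[of t0] by simp
      moreover have "0 < L\<^sup>2/(r t0)\<^sup>2" using Lp rpos[of t0] by simp
      ultimately show False using en[of t0] \<open>\<not> E > 0\<close> zero_le_power2[of "pr t0"]
        by (simp add: algebra_simps)
    qed
    have KE: "sqrt K < E"
    proof -
      have "K < E\<^sup>2" unfolding K_def using xi Lp by (simp add: mult_pos_neg algebra_simps)
      then have "sqrt K < sqrt (E\<^sup>2)" by (rule real_sqrt_less_mono)
      then show ?thesis using Epos by simp
    qed
    show ?thesis
    proof
      show "\<forall>t. L\<^sup>2 / (E * (r t)\<^sup>2) = 1 + sqrt (1 + L\<^sup>2 / E\<^sup>2 * (2 * \<rho> * E - \<xi>)) * cos (2 * phi t)"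
      proof
        fix t
        have "L\<^sup>2 / (E * (r t)\<^sup>2) = (E + sqrt K * cos (2 * phi t)) / E"
          using orb[of t] by (metis divide_divide_eq_left mult.commute)
        also have "\<dots> = 1 + sqrt K / E * cos (2 * phi t)"
          using Epos by (simp add: add_divide_distrib)
        finally show "L\<^sup>2 / (E * (r t)\<^sup>2) = 1 + sqrt (1 + L\<^sup>2 / E\<^sup>2 * (2 * \<rho> * E - \<xi>)) * cos (2 * phi t)"
          using sq Epos by simp
      qed
      show "\<exists>T > 0. \<forall>t. r (t + T) = r t \<and> pr (t + T) = pr t \<and>
                 (\<exists>k::int. phi (t + T) = phi t + 2 * pi * of_int k)"
        by (rule periodic[OF rho Lp real_sqrt_ge_zero[OF Knn] KE rpos dphi orb vorb])
    qed
  qed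
  show ?thesis using partA partB by blast
qed
end
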